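(* For every permutation $w\in S_n$, $\mathsf{rajcode}(w)=\mathsf{rajcode}(RD(w))$.
   Context: For $w\in S_n$, $\mathsf{Inv}(w)=\{(i,j):i<j,\ w(i)>w(j)\}$ and the Rothe diagram is $RD(w)=\{(r,w(r')):(r,r')\in\mathsf{Inv}(w)\}$. Let $\mathrm{LIS}^w(q)$ be the length of the longest increasing subsequence of the one-line notation of $w$ starting with $q$. $\mathsf{rajcode}(w)$ is the weak composition with $r$-th entry $n+1-r-\mathrm{LIS}^w(w(r))$ for $r\in[n]$ and $0$ for $r>n$. A diagram is a finite subset of $\mathbb{Z}_{>0}\times\mathbb{Z}_{>0}$; $(r,c)$ is in row $r$ (row 1 on top), column $c$. The snow diagram $\mathsf{snow}(D)$: iterate through the rows of $D$ from bottom to top; in row $r$, find the rightmost cell $(r,c)\in D$ such that column $c$ contains no dark cloud yet; if it exists, label it a dark cloud and add a snowflake cell at $(r',c)$ for each $r'<r$ with $(r',c)\notin D$. $\mathsf{rajcode}(D)$ is the weak composition whose $i$-th entry is the number of cells (original cells plus snowflakes) in row $i$ of $\mathsf{snow}(D)$. *)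

theory Defs
  imports "HOL-Combinatorics.Permutations"
begin

text \<open>Permutations of [n] are functions w :: nat => nat with  w permutes {1..n}.
  Weak compositions are functions nat => nat, entry i at index i (i >= 1).\<close>

definition inc_subseqs_from :: "nat \<Rightarrow> (nat \<Rightarrow> nat) \<Rightarrow> nat \<Rightarrow> nat set set" where
  "inc_subseqs_from n w q =
     {S. S \<subseteq> {1..n} \<and> strict_mono_on S w \<and> (\<exists>p\<in>S. w p = q \<and> (\<forall>i\<in>S. p \<le> i))}"

definition LIS :: "nat \<Rightarrow> (nat \<Rightarrow> nat) \<Rightarrow> nat \<Rightarrow> nat" where
  "LIS n w q = Max (card ` inc_subseqs_from n w q)"

definition rajcode_perm :: "nat \<Rightarrow> (nat \<Rightarrow> nat) \<Rightarrow> nat \<Rightarrow> nat" where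
  "rajcode_perm n w r = (if 1 \<le> r \<and> r \<le> n then n + 1 - r - LIS n w (w r) else 0)"

definition Inv :: "nat \<Rightarrow> (nat \<Rightarrow> nat) \<Rightarrow> (nat \<times> nat) set" where
  "Inv n w = {(i, j). 1 \<le> i \<and> i < j \<and> j \<le> n \<and> w i > w j}"

definition rothe_diagram :: "nat \<Rightarrow> (nat \<Rightarrow> nat) \<Rightarrow> (nat \<times> nat) set" where
  "rothe_diagram n w = {(r, w r') | r r'. (r, r') \<in> Inv n w}"

text \<open>State: (set of columns containing a dark cloud, set of snowflake cells).\<close>
definition snow_row :: "(nat \<times> nat) set \<Rightarrow> nat set \<times> (nat \<times> nat) set \<Rightarrow> nat
    \<Rightarrow> nat set \<times> (nat \<times> nat) set" where
  "snow_row D st r =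
     (let C = fst st; S = snd st; cand = {c. (r, c) \<in> D \<and> c \<notin> C} in
      if cand = {} then st
      else (let c = Max cand in
            (insert c C, S \<union> {(r', c) | r'. 1 \<le> r' \<and> r' < r \<and> (r', c) \<notin> D})))"

definition snowflakes :: "(nat \<times> nat) set \<Rightarrow> (nat \<times> nat) set" where
  "snowflakes D = snd (foldl (snow_row D) ({}, {}) (rev [1..<Suc (Max (insert 0 (fst ` D)))]))"

definition snow :: "(nat \<times> nat) set \<Rightarrow> (nat \<times> nat) set" where
  "snow D = D \<union> snowflakes D"

definition rajcode_diag :: "(nat \<times> nat) set \<Rightarrow> nat \<Rightarrow> nat" where
  "rajcode_diag D i = card {c. (i, c) \<in> snow D}"

end

theory Submission
  imports Defs
begin


lemma schensted_count:
  fixes V :: "nat set" and x t :: nat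
  assumes fin: "finite V" and xV: "x \<notin> V"
  defines "cand \<equiv> {v\<in>V. v < x}"
  shows "card {v\<in>(if cand = {} then insert x V else insert x V - {Max cand}). t < v}
     = (if x \<le> t then card {v\<in>V. t<v} else max (card {v\<in>V. t<v}) (Suc (card {v\<in>V. x<v})))"
proof -
  have fc: "finite cand" using fin by (simp add: cand_def)
  show ?thesis
  proof (cases "x \<le> t")
    case True
    have eq: "{v\<in>(if cand = {} then insert x V else insert x V - {Max cand}). t < v} = {v\<in>V. t<v}"
    proof (cases "cand = {}")
      case False
      have "Max cand < x" using Max_in[OF fc False] by (simp add: cand_def)
      then show ?thesis using False True by auto
    qed (use True in auto)
    show ?thesis unfolding eq using True by simp
  next
    case False
    define A where "A = {v\<in>V. x<v}"
    define B where "B = {v\<in>V. t<v \<and> v<x}"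
    have AB1: "{v\<in>V. t<v} = A \<union> B"
    proof -
      have "v < x" if "v \<in> V" "\<not> x < v" for v
      proof -
        have "v \<noteq> x" using that xV by blast
        then show ?thesis using that(2) by linarith
      qed
      then show ?thesis using False by (auto simp: A_def B_def)
    qed
    have AB2: "A \<inter> B = {}" by (auto simp: A_def B_def)
    note AB = AB1 AB2
    have fA: "finite A" "finite B" using fin by (auto simp: A_def B_def)
    have xA: "x \<notin> A \<union> B" by (auto simp: A_def B_def)
    show ?thesis
    proof (cases "B = {}")
      case True
      have eq: "{v\<in>(if cand = {} then insert x V else insert x V - {Max cand}). t < v} = insert x A"
      proof (cases "cand = {}")
        case c: False
        have "Max cand \<in> cand" using Max_in[OF fc c] .
        then have "\<not> t < Max cand" using True by (auto simp: cand_def B_def)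
        then show ?thesis using c False True AB(1) by (auto simp: A_def B_def)
      qed (use False True AB in \<open>auto simp: A_def B_def\<close>)
      show ?thesis unfolding eq using False True AB fA xA by (simp add: A_def[symmetric] card_insert_if)
    next
      case Bne: False
      then have c: "cand \<noteq> {}" by (auto simp: cand_def B_def)
      have mB: "Max cand \<in> B"
      proof -
        obtain b where b: "b \<in> B" using Bne by auto
        then have "b \<in> cand" by (auto simp: cand_def B_def)
        then have "b \<le> Max cand" using fc by simp
        then show ?thesis using Max_in[OF fc c] b by (auto simp: cand_def B_def)
      qed
      have eq: "{v\<in>(if cand = {} then insert x V else insert x V - {Max cand}). t < v} = insert x (A \<union> (B - {Max cand}))"
        using c False mB by (auto simp: A_def B_def)
      moreover have "card (insert x (A \<union> (B - {Max cand}))) = card A + card B"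
      proof -
        have "x \<notin> A \<union> (B - {Max cand})" using xA by blast
        then have "card (insert x (A \<union> (B - {Max cand}))) = Suc (card (A \<union> (B - {Max cand})))"
          using fA by simp
        also have "card (A \<union> (B - {Max cand})) = card A + card (B - {Max cand})"
          using fA AB(2) by (intro card_Un_disjoint) auto
        also have "card (B - {Max cand}) = card B - 1" using mB fA by simp
        finally have eq2: "card (insert x (A \<union> (B - {Max cand}))) = Suc (card A + (card B - 1))" .
        have pos: "card B > 0" using mB fA(2) by (auto simp: card_gt_0_iff)
        show ?thesis unfolding eq2 using pos by simp
      qed
      moreover have "card {v\<in>V. t<v} = card A + card B" using AB fA by (simp add: card_Un_disjoint)
      moreover have "card B \<ge> 1" using Bne fA by (simp add: Suc_le_eq card_gt_0_iff)
      ultimately show ?thesis unfolding eq using False by (simp add: A_def[symmetric])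
    qed
  qed
qed



definition Fam :: "nat \<Rightarrow> (nat \<Rightarrow> nat) \<Rightarrow> nat \<Rightarrow> nat \<Rightarrow> nat set set" where
  "Fam n w j t = {S. S \<subseteq> {j..n} \<and> strict_mono_on S w \<and> (\<forall>i\<in>S. t < w i)}"

definition fL :: "nat \<Rightarrow> (nat \<Rightarrow> nat) \<Rightarrow> nat \<Rightarrow> nat \<Rightarrow> nat" where
  "fL n w j t = Max (card ` Fam n w j t)"

lemma Fam_fin: "finite (Fam n w j t)"
  by (rule finite_subset[of _ "Pow {j..n}"]) (auto simp: Fam_def)

lemma Fam_ne: "{} \<in> Fam n w j t"
  by (simp add: Fam_def strict_mono_on_def monotone_on_def)

lemma Fam_ne': "Fam n w j t \<noteq> {}"
  using Fam_ne by blast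

lemma Fam_empty: "Suc n \<le> j \<Longrightarrow> Fam n w j t = {{}}"
  using Fam_ne[of n w j t] by (auto simp: Fam_def)

lemma fL_empty: "Suc n \<le> j \<Longrightarrow> fL n w j t = 0"
  by (simp add: fL_def Fam_empty)

lemma smo_insert:
  fixes S :: "nat set" and w :: "nat \<Rightarrow> nat"
  assumes "strict_mono_on S w" "\<forall>i\<in>S. j < i \<and> w j < w i"
  shows "strict_mono_on (insert j S) w"
  unfolding strict_mono_on_def monotone_on_def
proof (intro ballI impI)
  fix r s assume rs0: "r \<in> insert j S" "s \<in> insert j S" "r < s"
  then have rs: "r \<in> insert j S \<and> s \<in> insert j S \<and> r < s" by blast
  show "w r < w s"
  proof (cases "r = j")
    case True
    then show ?thesis using rs assms(2) by (cases "s = j") auto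
  next
    case False
    then have r: "r \<in> S" using rs by auto
    then have "s \<noteq> j" using assms(2) rs by auto
    then have "s \<in> S" using rs by auto
    then show ?thesis using r rs assms(1) unfolding strict_mono_on_def monotone_on_def by blast
  qed
qed

lemma Fam_ins:
  assumes jn: "j \<le> n"
  shows "insert j ` Fam n w (Suc j) (w j) = {S. S \<subseteq> {j..n} \<and> strict_mono_on S w \<and> j \<in> S}"
proof (intro set_eqI iffI)
  fix S assume "S \<in> insert j ` Fam n w (Suc j) (w j)"
  then obtain S' where S: "S = insert j S'" "S' \<in> Fam n w (Suc j) (w j)" by auto
  have "strict_mono_on S w" unfolding S(1)
    by (rule smo_insert) (use S(2) in \<open>auto simp: Fam_def\<close>)
  then show "S \<in> {S. S \<subseteq> {j..n} \<and> strict_mono_on S w \<and> j \<in> S}"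
    using S jn by (auto simp: Fam_def)
next
  fix S assume S: "S \<in> {S. S \<subseteq> {j..n} \<and> strict_mono_on S w \<and> j \<in> S}"
  have "S - {j} \<in> Fam n w (Suc j) (w j)"
  proof -
    have "S - {j} \<subseteq> {Suc j..n}" using S by auto
    moreover have "strict_mono_on (S - {j}) w"
      using S by (auto simp: strict_mono_on_def monotone_on_def)
    moreover have "\<forall>i\<in>S-{j}. w j < w i"
    proof
      fix i assume i: "i \<in> S - {j}"
      then have "j < i" using S by auto
      then show "w j < w i" using S i by (auto simp: strict_mono_on_def monotone_on_def)
    qed
    ultimately show ?thesis by (simp add: Fam_def)
  qed
  moreover have "S = insert j (S - {j})" using S by auto
  ultimately show "S \<in> insert j ` Fam n w (Suc j) (w j)" by blast
qed

lemma Fam_rec: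
  assumes "j \<le> n"
  shows "Fam n w j t = Fam n w (Suc j) t \<union> (if t < w j then insert j ` Fam n w (Suc j) (w j) else {})"
proof (intro set_eqI iffI)
  fix S assume S: "S \<in> Fam n w j t"
  show "S \<in> Fam n w (Suc j) t \<union> (if t < w j then insert j ` Fam n w (Suc j) (w j) else {})"
  proof (cases "j \<in> S")
    case True
    then have "t < w j" using S by (auto simp: Fam_def)
    moreover have "S \<in> insert j ` Fam n w (Suc j) (w j)" unfolding Fam_ins[OF assms] using S True
      by (auto simp: Fam_def)
    ultimately show ?thesis by simp
  next
    case False
    have "S \<subseteq> {Suc j..n}"
    proof
      fix x assume "x \<in> S"
      then have "x \<in> {j..n}" "x \<noteq> j" using S False by (auto simp: Fam_def)
      then show "x \<in> {Suc j..n}" by auto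
    qed
    then have "S \<in> Fam n w (Suc j) t" using S by (auto simp: Fam_def)
    then show ?thesis by simp
  qed
next
  fix S assume S: "S \<in> Fam n w (Suc j) t \<union> (if t < w j then insert j ` Fam n w (Suc j) (w j) else {})"
  show "S \<in> Fam n w j t"
  proof (cases "S \<in> Fam n w (Suc j) t")
    case True then show ?thesis by (auto simp: Fam_def)
  next
    case False
    then have t: "t < w j" and S2: "S \<in> insert j ` Fam n w (Suc j) (w j)" using S by (auto split: if_splits)
    then obtain S' where S': "S = insert j S'" "S' \<in> Fam n w (Suc j) (w j)" by auto
    have "\<forall>i\<in>S. t < w i" using S' t by (auto simp: Fam_def)
    then show ?thesis using S2 unfolding Fam_ins[OF assms] by (auto simp: Fam_def)
  qed
qed

lemma card_ins_Fam: "card ` insert j ` Fam n w (Suc j) x = Suc ` card ` Fam n w (Suc j) x"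
proof -
  have "card (insert j S) = Suc (card S)" if "S \<in> Fam n w (Suc j) x" for S
  proof -
    have "finite S" "j \<notin> S" using that by (auto simp: Fam_def intro: finite_subset)
    then show ?thesis by simp
  qed
  then show ?thesis by (auto simp: image_image image_iff)
qed

lemma Max_Suc_img: "finite X \<Longrightarrow> X \<noteq> {} \<Longrightarrow> Max (Suc ` X) = Suc (Max X)"
  by (simp add: mono_Max_commute[symmetric] mono_Suc)

lemma fL_ins: "Max (card ` insert j ` Fam n w (Suc j) x) = Suc (fL n w (Suc j) x)"
  unfolding card_ins_Fam fL_def using Fam_fin Fam_ne'
  by (intro Max_Suc_img) auto

lemma fL_rec:
  assumes "j \<le> n"
  shows "fL n w j t = (if w j \<le> t then fL n w (Suc j) t else max (fL n w (Suc j) t) (Suc (fL n w (Suc j) (w j))))"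
proof (cases "w j \<le> t")
  case True
  then show ?thesis using Fam_rec[OF assms, of w t] by (simp add: fL_def)
next
  case False
  have "fL n w j t = Max (card ` Fam n w (Suc j) t \<union> card ` insert j ` Fam n w (Suc j) (w j))"
    using Fam_rec[OF assms, of w t] False by (simp add: fL_def image_Un)
  also have "\<dots> = max (Max (card ` Fam n w (Suc j) t)) (Max (card ` insert j ` Fam n w (Suc j) (w j)))"
    using Fam_fin Fam_ne' by (intro Max_Un) auto
  finally show ?thesis using False fL_ins by (simp add: fL_def)
qed

lemma LIS_eq:
  assumes inj: "inj w" and i: "1 \<le> i" "i \<le> n"
  shows "LIS n w (w i) = Suc (fL n w (Suc i) (w i))"
proof -
  have "inc_subseqs_from n w (w i) = {S. S \<subseteq> {i..n} \<and> strict_mono_on S w \<and> i \<in> S}"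
  proof (intro set_eqI iffI)
    fix S assume "S \<in> inc_subseqs_from n w (w i)"
    then obtain p where S: "S \<subseteq> {1..n}" "strict_mono_on S w" "p \<in> S" "w p = w i" "\<forall>k\<in>S. p \<le> k"
      by (auto simp: inc_subseqs_from_def)
    have "p = i" using S(4) inj by (simp add: inj_eq)
    then show "S \<in> {S. S \<subseteq> {i..n} \<and> strict_mono_on S w \<and> i \<in> S}" using S by auto
  next
    fix S assume "S \<in> {S. S \<subseteq> {i..n} \<and> strict_mono_on S w \<and> i \<in> S}"
    then show "S \<in> inc_subseqs_from n w (w i)" using i
      unfolding inc_subseqs_from_def by (auto intro!: bexI[where x=i])
  qed
  then show ?thesis unfolding LIS_def using fL_ins[of i n w "w i"] Fam_ins[OF i(2), of w] by simp
qed



lemma rd_mem: "(r,c) \<in> rothe_diagram n w \<longleftrightarrow> 1 \<le> r \<and> (\<exists>s. r < s \<and> s \<le> n \<and> w s < w r \<and> c = w s)"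
  unfolding rothe_diagram_def Inv_def by auto

lemma rd_fin: "finite (rothe_diagram n w)"
  by (rule finite_subset[of _ "{..n} \<times> w ` {..n}"]) (auto simp: rd_mem)

definition st :: "nat \<Rightarrow> (nat \<Rightarrow> nat) \<Rightarrow> nat \<Rightarrow> nat set \<times> (nat \<times> nat) set" where
  "st n w j = foldl (snow_row (rothe_diagram n w)) ({}, {}) (rev [j..<Suc n])"

lemma st_step: "j \<le> n \<Longrightarrow> st n w j = snow_row (rothe_diagram n w) (st n w (Suc j)) j"
proof -
  assume "j \<le> n"
  then have "[j..<Suc n] = j # [Suc j..<Suc n]" by (intro upt_conv_Cons) simp
  then show ?thesis unfolding st_def by simp
qed

lemma st_big: "Suc n \<le> j \<Longrightarrow> st n w j = ({}, {})"
  unfolding st_def by simp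

lemma foldl_id: "(\<And>r s. r \<in> set xs \<Longrightarrow> f s r = s) \<Longrightarrow> foldl f s xs = s"
  by (induction xs arbitrary: s) auto

lemma snow_row_empty: "{c. (r,c) \<in> D \<and> c \<notin> fst s} = {} \<Longrightarrow> snow_row D s r = s"
  unfolding snow_row_def Let_def by simp

lemma snow_row_ne: "{c. (r,c) \<in> D \<and> c \<notin> fst s} \<noteq> {} \<Longrightarrow> snow_row D s r =
   (insert (Max {c. (r,c) \<in> D \<and> c \<notin> fst s}) (fst s),
    snd s \<union> {(r', Max {c. (r,c) \<in> D \<and> c \<notin> fst s}) | r'. 1 \<le> r' \<and> r' < r \<and> (r', Max {c. (r,c) \<in> D \<and> c \<notin> fst s}) \<notin> D})"
  unfolding snow_row_def Let_def by (simp only: if_False prod.collapse)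

lemma snowflakes_st: "snowflakes (rothe_diagram n w) = snd (st n w 1)"
proof -
  let ?D = "rothe_diagram n w"
  define M where "M = Max (insert 0 (fst ` ?D))"
  have fin: "finite (insert 0 (fst ` ?D))" using rd_fin by simp
  have Mn: "M \<le> n" unfolding M_def using fin
    by (subst Max_le_iff) (auto simp: rd_mem)
  have rowM: "(r,c) \<notin> ?D" if "M < r" for r c
  proof
    assume "(r,c) \<in> ?D"
    then have "r \<le> M" unfolding M_def using fin by (intro Max_ge) force+
    then show False using that by simp
  qed
  have "[1..<Suc M + (n - M)] = [1..<Suc M] @ [Suc M..<Suc M + (n - M)]" by (rule upt_add_eq_append) simp
  then have "[1..<Suc n] = [1..<Suc M] @ [Suc M..<Suc n]" using Mn by simp
  then have "rev [1..<Suc n] = rev [Suc M..<Suc n] @ rev [1..<Suc M]" by simp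
  moreover have "foldl (snow_row ?D) ({}, {}) (rev [Suc M..<Suc n]) = ({}, {})"
    by (rule foldl_id) (auto intro!: snow_row_empty simp: rowM)
  ultimately show ?thesis unfolding snowflakes_def st_def M_def[symmetric] by simp
qed

lemma inv_snow:
  assumes "1 \<le> j" "j \<le> Suc n"
  shows "\<forall>r' c. (r',c) \<in> snd (st n w j) \<longleftrightarrow> 1 \<le> r' \<and> (r',c) \<notin> rothe_diagram n w \<and> c \<in> fst (st n w (max j (Suc r')))"
  using assms(2)
proof (induction rule: inc_induct)
  case base
  then show ?case by (simp add: st_big)
next
  case (step m)
  let ?D = "rothe_diagram n w"
  let ?cand = "{c. (m,c) \<in> ?D \<and> c \<notin> fst (st n w (Suc m))}"
  have stm: "st n w m = snow_row ?D (st n w (Suc m)) m" using step by (simp add: st_step)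
  show ?case
  proof (cases "?cand = {}")
    case True
    have e: "st n w m = st n w (Suc m)" using trans[OF stm snow_row_empty[OF True]] .
    show ?thesis
    proof (intro allI)
      fix r' c
      show "(r',c) \<in> snd (st n w m) \<longleftrightarrow> 1 \<le> r' \<and> (r',c) \<notin> ?D \<and> c \<in> fst (st n w (max m (Suc r')))"
      proof (cases "r' < m")
        case True
        then have "max m (Suc r') = m" "max (Suc m) (Suc r') = Suc m" by auto
        then show ?thesis using step.IH e by simp
      next
        case False
        then have "max m (Suc r') = max (Suc m) (Suc r')" by simp
        then show ?thesis using step.IH e by simp
      qed
    qed
  next
    case False
    have e: "st n w m = (insert (Max ?cand) (fst (st n w (Suc m))),
        snd (st n w (Suc m)) \<union> {(r', Max ?cand) | r'. 1 \<le> r' \<and> r' < m \<and> (r', Max ?cand) \<notin> ?D})"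
      using trans[OF stm snow_row_ne[OF False]] .
    show ?thesis
    proof (intro allI)
      fix r' c
      show "(r',c) \<in> snd (st n w m) \<longleftrightarrow> 1 \<le> r' \<and> (r',c) \<notin> ?D \<and> c \<in> fst (st n w (max m (Suc r')))"
      proof (cases "r' < m")
        case True
        then have "max m (Suc r') = m" "max (Suc m) (Suc r') = Suc m" by auto
        then show ?thesis using step.IH e True by auto
      next
        case False
        then have "max m (Suc r') = max (Suc m) (Suc r')" by simp
        then show ?thesis using step.IH e False by auto
      qed
    qed
  qed
qed

lemma inv_main:
  assumes inj: "inj w" and j: "1 \<le> j" "j \<le> Suc n"
  shows "fst (st n w j) \<subseteq> w ` {j..n} \<and> (\<forall>t. card {v \<in> w ` {j..n} - fst (st n w j). t < v} = fL n w j t)"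
  using j(2)
proof (induction rule: inc_induct)
  case base
  then show ?case by (simp add: st_big fL_empty)
next
  case (step m)
  let ?D = "rothe_diagram n w"
  let ?C = "fst (st n w (Suc m))"
  let ?cand = "{c. (m,c) \<in> ?D \<and> c \<notin> ?C}"
  define V where "V = w ` {Suc m..n} - ?C"
  have m1: "1 \<le> m" "m \<le> n" using step j by auto
  have stm: "st n w m = snow_row ?D (st n w (Suc m)) m" using m1 by (simp add: st_step)
  have cand_eq: "?cand = {v\<in>V. v < w m}"
  proof (intro set_eqI iffI)
    fix c assume "c \<in> ?cand"
    then obtain s where "m < s" "s \<le> n" "w s < w m" "c = w s" "c \<notin> ?C" by (auto simp: rd_mem)
    then show "c \<in> {v\<in>V. v < w m}" by (auto simp: V_def)
  next
    fix c assume "c \<in> {v\<in>V. v < w m}"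
    then obtain s where "Suc m \<le> s" "s \<le> n" "w s < w m" "c = w s" "c \<notin> ?C" by (auto simp: V_def)
    then show "c \<in> ?cand" using m1 unfolding rd_mem by (auto simp: Suc_le_eq)
  qed
  have wm: "w ` {m..n} = insert (w m) (w ` {Suc m..n})"
  proof -
    have "{m..n} = insert m {Suc m..n}" using m1 by auto
    then show ?thesis by simp
  qed
  have wmn: "w m \<notin> w ` {Suc m..n}" using inj by (auto simp: inj_eq)
  have Csub: "?C \<subseteq> w ` {Suc m..n}" using step.IH by simp
  have finV: "finite V" by (simp add: V_def)
  have xV: "w m \<notin> V" using wmn by (simp add: V_def)
  have Vm: "w ` {m..n} - fst (st n w m) = (if {v\<in>V. v < w m} = {} then insert (w m) V else insert (w m) V - {Max {v\<in>V. v < w m}})"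
  proof (cases "?cand = {}")
    case True
    have "st n w m = st n w (Suc m)" using trans[OF stm snow_row_empty[OF True]] .
    then show ?thesis using True cand_eq wm wmn Csub by (auto simp: V_def)
  next
    case False
    have e: "fst (st n w m) = insert (Max ?cand) ?C" using trans[OF stm snow_row_ne[OF False]] by simp
    have fc: "finite ?cand" using finV cand_eq by simp
    have "Max ?cand \<in> ?cand" using Max_in[OF fc False] .
    then have "Max ?cand < w m" using cand_eq by auto
    then show ?thesis unfolding e using False cand_eq wm wmn Csub by (auto simp: V_def)
  qed
  have sub: "fst (st n w m) \<subseteq> w ` {m..n}"
  proof (cases "?cand = {}")
    case True
    have "st n w m = st n w (Suc m)" using trans[OF stm snow_row_empty[OF True]] .
    then show ?thesis using Csub wm by auto
  next
    case False
    have e: "fst (st n w m) = insert (Max ?cand) ?C" using trans[OF stm snow_row_ne[OF False]] by simp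
    have fc: "finite ?cand" using finV cand_eq by simp
    have "Max ?cand \<in> ?cand" using Max_in[OF fc False] .
    then have "Max ?cand \<in> w ` {Suc m..n}" using cand_eq by (auto simp: V_def)
    then show ?thesis unfolding e using Csub wm by auto
  qed
  have cnt: "card {v \<in> w ` {m..n} - fst (st n w m). t < v} = fL n w m t" for t
    unfolding Vm schensted_count[OF finV xV] fL_rec[OF m1(2)]
    using step.IH by (simp add: V_def)
  show ?case using sub cnt by blast
qed

lemma ar_lemma: "(a::nat) + 1 - b - Suc c = a - b - c"
  by simp

theorem theorem5p5:
  fixes n :: nat and w :: "nat \<Rightarrow> nat"
  assumes "w permutes {1..n}"
  shows "\<forall>i\<ge>1. rajcode_perm n w i = rajcode_diag (rothe_diagram n w) i"
proof (intro allI impI)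
  fix i :: nat assume i1: "1 \<le> i"
  let ?D = "rothe_diagram n w"
  have inj: "inj w" using assms permutes_inj by blast
  have row: "{c. (i,c) \<in> snow ?D} = {c. (i,c) \<in> ?D} \<union> fst (st n w (Suc i))"
  proof -
    have "\<forall>c. (i,c) \<in> snd (st n w 1) \<longleftrightarrow> (i,c) \<notin> ?D \<and> c \<in> fst (st n w (Suc i))"
      using inv_snow[of 1 n w] i1 by simp
    then show ?thesis by (auto simp: snow_def snowflakes_st)
  qed
  show "rajcode_perm n w i = rajcode_diag ?D i"
  proof (cases "i \<le> n")
    case False
    then have "{c. (i,c) \<in> ?D} = {}" by (auto simp: rd_mem)
    moreover have "fst (st n w (Suc i)) = {}" using False by (simp add: st_big)
    ultimately have "rajcode_diag ?D i = 0" unfolding rajcode_diag_def row by simp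
    moreover have "rajcode_perm n w i = 0" using False unfolding rajcode_perm_def by simp
    ultimately show ?thesis by simp
  next
    case True
    define W where "W = w ` {Suc i..n}"
    define C where "C = fst (st n w (Suc i))"
    have IM0: "fst (st n w (Suc i)) \<subseteq> w ` {Suc i..n} \<and> (\<forall>t. card {v \<in> w ` {Suc i..n} - fst (st n w (Suc i)). t < v} = fL n w (Suc i) t)"
      by (rule inv_main[OF inj]) (use True in auto)
    have IM: "C \<subseteq> W" "card {v \<in> W - C. w i < v} = fL n w (Suc i) (w i)"
      unfolding W_def C_def using IM0 by blast+
    have Di: "{c. (i,c) \<in> ?D} = {v\<in>W. v < w i}"
    proof (intro set_eqI iffI)
      fix c assume "c \<in> {c. (i,c) \<in> ?D}"
      then obtain s where "i < s" "s \<le> n" "w s < w i" "c = w s" by (auto simp: rd_mem)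
      then show "c \<in> {v\<in>W. v < w i}" by (auto simp: W_def)
    next
      fix c assume "c \<in> {v\<in>W. v < w i}"
      then obtain s where "Suc i \<le> s" "s \<le> n" "w s < w i" "c = w s" by (auto simp: W_def)
      then show "c \<in> {c. (i,c) \<in> ?D}" using i1 unfolding rd_mem by (auto simp: Suc_le_eq)
    qed
    have wiW: "w i \<notin> W" using inj by (auto simp: W_def inj_eq)
    define U where "U = {v\<in>W. v < w i} \<union> C"
    have UW: "U \<subseteq> W" using IM by (auto simp: U_def)
    have WU: "W - U = {v \<in> W - C. w i < v}"
    proof (intro set_eqI iffI)
      fix x assume x: "x \<in> W - U"
      then have "x \<noteq> w i" using wiW by blast
      moreover have "\<not> x < w i" using x by (auto simp: U_def)
      ultimately show "x \<in> {v \<in> W - C. w i < v}" using x by (auto simp: U_def)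
    qed (auto simp: U_def)
    have finW: "finite W" by (simp add: W_def)
    have "inj_on w {Suc i..n}" using inj_on_subset[OF inj subset_UNIV] .
    then have "card W = card {Suc i..n}" unfolding W_def by (rule card_image)
    then have cW: "card W = n - i" by simp
    have finU: "finite U" using finite_subset[OF UW finW] .
    have "card (W - U) = card W - card U" using card_Diff_subset[OF finU UW] .
    moreover have "card U \<le> card W" using card_mono[OF finW UW] .
    moreover have "card (W - U) = fL n w (Suc i) (w i)" unfolding WU using IM(2) .
    ultimately have cU: "card U = n - i - fL n w (Suc i) (w i)" using cW by linarith
    have rd: "rajcode_diag ?D i = card U" unfolding rajcode_diag_def row Di U_def C_def ..
    have "LIS n w (w i) = Suc (fL n w (Suc i) (w i))" using LIS_eq[OF inj i1 True] .
    then have rp: "rajcode_perm n w i = n + 1 - i - Suc (fL n w (Suc i) (w i))"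
      using True i1 unfolding rajcode_perm_def by simp
    have ar: "n + 1 - i - Suc (fL n w (Suc i) (w i)) = n - i - fL n w (Suc i) (w i)" by (rule ar_lemma)
    show ?thesis using rp ar cU rd by (simp only:)
  qed
qed

end
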